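(* Let $N$ be an nfa with $n$ states accepting the language $L$, and suppose $L$ has exactly $2^n$ distinct left derivatives. Then $\mathrm{LQ}(L)$ is a boolean algebra, and $\mathrm{ns}(L)=\mathrm{nsyn}(L)=n$.
   Context: Left derivatives: $u^{-1}L=\{w:uw\in L\}$. $\mathrm{LQ}(L)$ is the set of finite unions (including $\emptyset$) of left derivatives, ordered by inclusion. An nfa has finitely many states, transition relations, and sets of initial and final states (several initial states allowed). $\mathrm{ns}(L)$ is the least number of states of an nfa accepting $L$; $\mathrm{nsyn}(L)$ is the least number of states of an nfa for $L$ all of whose states accept languages in the boolean algebra generated by the two-sided derivatives $u^{-1}Lv^{-1}=\{w:uwv\in L\}$. *)

theory Defs
  imports Main
begin

record ('s, 'a) nfa =
  states :: "'s set"
  init   :: "'s set"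
  final  :: "'s set"
  delta  :: "('s \<times> 'a \<times> 's) set"

definition wf_nfa :: "('s, 'a) nfa \<Rightarrow> bool" where
  "wf_nfa N \<longleftrightarrow> finite (states N) \<and> init N \<subseteq> states N \<and> final N \<subseteq> states N
     \<and> delta N \<subseteq> states N \<times> UNIV \<times> states N"

fun steps :: "('s, 'a) nfa \<Rightarrow> 's set \<Rightarrow> 'a list \<Rightarrow> 's set" where
  "steps N S [] = S"
| "steps N S (a # w) = steps N {q'. \<exists>q\<in>S. (q, a, q') \<in> delta N} w"

definition lang :: "('s, 'a) nfa \<Rightarrow> 'a list set" where
  "lang N = {w. steps N (init N) w \<inter> final N \<noteq> {}}"

definition state_lang :: "('s, 'a) nfa \<Rightarrow> 's \<Rightarrow> 'a list set" where
  "state_lang N q = {w. steps N {q} w \<inter> final N \<noteq> {}}"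

definition lderiv :: "'a list \<Rightarrow> 'a list set \<Rightarrow> 'a list set" where
  "lderiv u L = {w. u @ w \<in> L}"

definition left_derivs :: "'a list set \<Rightarrow> 'a list set set" where
  "left_derivs L = {lderiv u L | u. True}"

definition two_sided_derivs :: "'a list set \<Rightarrow> 'a list set set" where
  "two_sided_derivs L = {{w. u @ w @ v \<in> L} | u v. True}"

definition LQ :: "'a list set \<Rightarrow> 'a list set set" where
  "LQ L = {\<Union> F | F. finite F \<and> F \<subseteq> left_derivs L}"

inductive_set bool_gen :: "'b set set \<Rightarrow> 'b set set" for G where
  gen: "X \<in> G \<Longrightarrow> X \<in> bool_gen G"
| compl: "X \<in> bool_gen G \<Longrightarrow> - X \<in> bool_gen G"
| union: "X \<in> bool_gen G \<Longrightarrow> Y \<in> bool_gen G \<Longrightarrow> X \<union> Y \<in> bool_gen G"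

definition is_sup :: "'b set set \<Rightarrow> 'b set \<Rightarrow> 'b set \<Rightarrow> 'b set \<Rightarrow> bool" where
  "is_sup S x y z \<longleftrightarrow> z \<in> S \<and> x \<subseteq> z \<and> y \<subseteq> z \<and> (\<forall>w\<in>S. x \<subseteq> w \<and> y \<subseteq> w \<longrightarrow> z \<subseteq> w)"

definition is_inf :: "'b set set \<Rightarrow> 'b set \<Rightarrow> 'b set \<Rightarrow> 'b set \<Rightarrow> bool" where
  "is_inf S x y z \<longleftrightarrow> z \<in> S \<and> z \<subseteq> x \<and> z \<subseteq> y \<and> (\<forall>w\<in>S. w \<subseteq> x \<and> w \<subseteq> y \<longrightarrow> w \<subseteq> z)"

definition boolean_poset :: "'b set set \<Rightarrow> bool" where
  "boolean_poset S \<longleftrightarrow>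
     (\<forall>x\<in>S. \<forall>y\<in>S. (\<exists>z. is_sup S x y z) \<and> (\<exists>z. is_inf S x y z))
   \<and> (\<forall>x\<in>S. \<forall>y\<in>S. \<forall>z\<in>S. \<forall>yz d xy xz.
        is_sup S y z yz \<longrightarrow> is_inf S x yz d \<longrightarrow> is_inf S x y xy \<longrightarrow> is_inf S x z xz
        \<longrightarrow> is_sup S xy xz d)
   \<and> (\<exists>b\<in>S. \<exists>t\<in>S. (\<forall>x\<in>S. b \<subseteq> x \<and> x \<subseteq> t)
        \<and> (\<forall>x\<in>S. \<exists>c\<in>S. is_sup S x c t \<and> is_inf S x c b))"

text \<open>State sets are taken to be sets of naturals w.l.o.g.\<close>
definition ns :: "'a list set \<Rightarrow> nat" where
  "ns L = (LEAST k. \<exists>M :: (nat, 'a) nfa. wf_nfa M \<and> card (states M) = k \<and> lang M = L)"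

definition nsyn :: "'a list set \<Rightarrow> nat" where
  "nsyn L = (LEAST k. \<exists>M :: (nat, 'a) nfa. wf_nfa M \<and> card (states M) = k \<and> lang M = L
      \<and> (\<forall>q\<in>states M. state_lang M q \<in> bool_gen (two_sided_derivs L)))"

end

theory Submission
  imports Defs
begin

lemma steps_subset: "wf_nfa N \<Longrightarrow> S \<subseteq> states N \<Longrightarrow> steps N S w \<subseteq> states N"
proof (induction w arbitrary: S)
  case Nil then show ?case by simp
next
  case (Cons a w)
  have "{q'. \<exists>q\<in>S. (q, a, q') \<in> delta N} \<subseteq> states N" using Cons.prems by (auto simp: wf_nfa_def)
  then show ?case using Cons.IH Cons.prems by simp
qed

lemma steps_append: "steps N S (u @ w) = steps N (steps N S u) w"
  by (induction u arbitrary: S) auto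

lemma steps_union: "steps N S w = (\<Union>q\<in>S. steps N {q} w)"
proof (induction w arbitrary: S)
  case Nil then show ?case by auto
next
  case (Cons a w)
  define F where "F = (\<lambda>q'. steps N {q'} w)"
  have e1: "steps N S (a # w) = (\<Union>q'\<in>{q'. \<exists>q\<in>S. (q, a, q') \<in> delta N}. F q')"
  proof -
    have "steps N S (a # w) = steps N {q'. \<exists>q\<in>S. (q, a, q') \<in> delta N} w" by simp
    also have "\<dots> = (\<Union>q'\<in>{q'. \<exists>q\<in>S. (q, a, q') \<in> delta N}. F q')"
      unfolding F_def by (rule Cons.IH)
    finally show ?thesis .
  qed
  have e2: "steps N {q} (a # w) = (\<Union>q'\<in>{q'. (q, a, q') \<in> delta N}. F q')" for q
  proof -
    have "steps N {q} (a # w) = steps N {q'. (q, a, q') \<in> delta N} w" by simp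
    also have "\<dots> = (\<Union>q'\<in>{q'. (q, a, q') \<in> delta N}. F q')"
      unfolding F_def by (rule Cons.IH)
    finally show ?thesis .
  qed
  have "(\<Union>q'\<in>{q'. \<exists>q\<in>S. (q, a, q') \<in> delta N}. F q')
      = (\<Union>q\<in>S. \<Union>q'\<in>{q'. (q, a, q') \<in> delta N}. F q')" by blast
  then show ?case unfolding e1 e2 .
qed

definition UL :: "('s, 'a) nfa \<Rightarrow> 's set \<Rightarrow> 'a list set" where
  "UL N S = (\<Union>q\<in>S. state_lang N q)"

lemma lderiv_UL: "lderiv u (lang N) = UL N (steps N (init N) u)"
proof -
  have "w \<in> lderiv u (lang N) \<longleftrightarrow> w \<in> UL N (steps N (init N) u)" for w
    unfolding lderiv_def lang_def UL_def state_lang_def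
    using steps_union[of N "steps N (init N) u" w] by (auto simp: steps_append)
  then show ?thesis by blast
qed

lemma left_derivs_UL: "left_derivs (lang N) = UL N ` {steps N (init N) u | u. True}"
  unfolding left_derivs_def by (auto simp: lderiv_UL)

lemma reach_subset: "wf_nfa N \<Longrightarrow> {steps N (init N) u | u. True} \<subseteq> Pow (states N)"
proof
  fix X assume w: "wf_nfa N" and "X \<in> {steps N (init N) u | u. True}"
  then obtain u where u: "X = steps N (init N) u" by blast
  have "init N \<subseteq> states N" using w unfolding wf_nfa_def by blast
  then have "X \<subseteq> states N" using steps_subset[OF w] u by blast
  then show "X \<in> Pow (states N)" by blast
qed

lemma card_ld_le: "wf_nfa N \<Longrightarrow> card (left_derivs (lang N)) \<le> 2 ^ card (states N)"
proof -
  assume w: "wf_nfa N"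
  let ?R = "{steps N (init N) u | u. True}"
  have f: "finite (Pow (states N))" using w by (simp add: wf_nfa_def)
  have "card (left_derivs (lang N)) \<le> card ?R"
    unfolding left_derivs_UL by (rule card_image_le, rule finite_subset[OF reach_subset[OF w] f])
  also have "\<dots> \<le> card (Pow (states N))" by (rule card_mono[OF f reach_subset[OF w]])
  also have "\<dots> = 2 ^ card (states N)" using w by (simp add: wf_nfa_def card_Pow)
  finally show ?thesis .
qed

section \<open>Boolean algebra from powerset embedding\<close>

lemma sup_char:
  assumes S: "S = f ` Pow A" and emb: "\<And>X Y. X \<subseteq> A \<Longrightarrow> Y \<subseteq> A \<Longrightarrow> f X \<subseteq> f Y \<longleftrightarrow> X \<subseteq> Y"
    and X: "X \<subseteq> A" and Y: "Y \<subseteq> A"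
  shows "is_sup S (f X) (f Y) z \<longleftrightarrow> z = f (X \<union> Y)"
proof
  assume h: "is_sup S (f X) (f Y) z"
  then obtain Z where Z: "Z \<subseteq> A" "z = f Z" unfolding is_sup_def S by auto
  have "X \<subseteq> Z" "Y \<subseteq> Z" using h Z emb X Y unfolding is_sup_def by auto
  then have 1: "f (X \<union> Y) \<subseteq> z" using emb[of "X \<union> Y" Z] Z X Y by auto
  have "z \<subseteq> f (X \<union> Y)" using h X Y emb unfolding is_sup_def S by auto
  with 1 show "z = f (X \<union> Y)" by auto
next
  assume "z = f (X \<union> Y)"
  then show "is_sup S (f X) (f Y) z" unfolding is_sup_def S using X Y emb by auto
qed

lemma inf_char:
  assumes S: "S = f ` Pow A" and emb: "\<And>X Y. X \<subseteq> A \<Longrightarrow> Y \<subseteq> A \<Longrightarrow> f X \<subseteq> f Y \<longleftrightarrow> X \<subseteq> Y"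
    and X: "X \<subseteq> A" and Y: "Y \<subseteq> A"
  shows "is_inf S (f X) (f Y) z \<longleftrightarrow> z = f (X \<inter> Y)"
proof
  assume h: "is_inf S (f X) (f Y) z"
  then obtain Z where Z: "Z \<subseteq> A" "z = f Z" unfolding is_inf_def S by auto
  have "Z \<subseteq> X" "Z \<subseteq> Y" using h Z emb X Y unfolding is_inf_def by auto
  then have 1: "z \<subseteq> f (X \<inter> Y)" using emb[of Z "X \<inter> Y"] Z X Y by auto
  have "f (X \<inter> Y) \<subseteq> z" using h X Y emb unfolding is_inf_def S by auto
  with 1 show "z = f (X \<inter> Y)" by auto
next
  assume z: "z = f (X \<inter> Y)"
  have a: "f (X \<inter> Y) \<subseteq> f X" "f (X \<inter> Y) \<subseteq> f Y"
    using emb[of "X \<inter> Y" X] emb[of "X \<inter> Y" Y] X Y by auto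
  have b: "\<forall>w\<in>S. w \<subseteq> f X \<and> w \<subseteq> f Y \<longrightarrow> w \<subseteq> f (X \<inter> Y)"
  proof (intro ballI impI)
    fix w assume "w \<in> S" "w \<subseteq> f X \<and> w \<subseteq> f Y"
    then obtain W where W: "W \<subseteq> A" "w = f W" "f W \<subseteq> f X" "f W \<subseteq> f Y" unfolding S by auto
    then have "W \<subseteq> X \<inter> Y" using emb[of W X] emb[of W Y] X Y by auto
    then show "w \<subseteq> f (X \<inter> Y)" using emb[of W "X \<inter> Y"] W X by auto
  qed
  have "f (X \<inter> Y) \<in> S" unfolding S using X by auto
  then show "is_inf S (f X) (f Y) z" unfolding is_inf_def z using a b by blast
qed

lemma boolean_from_pow:
  assumes S: "S = f ` Pow A" and emb: "\<And>X Y. X \<subseteq> A \<Longrightarrow> Y \<subseteq> A \<Longrightarrow> f X \<subseteq> f Y \<longleftrightarrow> X \<subseteq> Y"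
  shows "boolean_poset S"
proof -
  have sc: "is_sup S (f X) (f Y) z \<longleftrightarrow> z = f (X \<union> Y)" if "X \<subseteq> A" "Y \<subseteq> A" for X Y z
    by (rule sup_char[OF S]) (fact emb, fact that(1), fact that(2))
  have ic: "is_inf S (f X) (f Y) z \<longleftrightarrow> z = f (X \<inter> Y)" if "X \<subseteq> A" "Y \<subseteq> A" for X Y z
    by (rule inf_char[OF S]) (fact emb, fact that(1), fact that(2))
  have memS: "\<And>x. x \<in> S \<Longrightarrow> \<exists>X. X \<subseteq> A \<and> x = f X" unfolding S by blast
  have 1: "\<forall>x\<in>S. \<forall>y\<in>S. (\<exists>z. is_sup S x y z) \<and> (\<exists>z. is_inf S x y z)"
  proof (intro ballI)
    fix x y assume xS: "x \<in> S" and yS: "y \<in> S"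
    obtain X where X: "X \<subseteq> A" "x = f X" using memS[OF xS] by blast
    obtain Y where Y: "Y \<subseteq> A" "y = f Y" using memS[OF yS] by blast
    have "is_sup S (f X) (f Y) (f (X \<union> Y))" using sc[OF X(1) Y(1)] by simp
    moreover have "is_inf S (f X) (f Y) (f (X \<inter> Y))" using ic[OF X(1) Y(1)] by simp
    ultimately show "(\<exists>z. is_sup S x y z) \<and> (\<exists>z. is_inf S x y z)" using X(2) Y(2) by auto
  qed
  have 2: "\<forall>x\<in>S. \<forall>y\<in>S. \<forall>z\<in>S. \<forall>yz d xy xz.
        is_sup S y z yz \<longrightarrow> is_inf S x yz d \<longrightarrow> is_inf S x y xy \<longrightarrow> is_inf S x z xz
        \<longrightarrow> is_sup S xy xz d"
  proof (intro ballI allI impI)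
    fix x y z yz d xy xz
    assume "x \<in> S" "y \<in> S" "z \<in> S"
    then obtain X Y Z where XYZ: "X \<subseteq> A" "Y \<subseteq> A" "Z \<subseteq> A" "x = f X" "y = f Y" "z = f Z"
      using memS by meson
    assume a: "is_sup S y z yz" "is_inf S x yz d" "is_inf S x y xy" "is_inf S x z xz"
    have "yz = f (Y \<union> Z)" using a(1) sc XYZ by auto
    then have "d = f (X \<inter> (Y \<union> Z))" using a(2) ic XYZ by auto
    moreover have "xy = f (X \<inter> Y)" using a(3) ic XYZ by auto
    moreover have "xz = f (X \<inter> Z)" using a(4) ic XYZ by auto
    ultimately have e: "d = f (X \<inter> Y \<union> X \<inter> Z)" "xy = f (X \<inter> Y)" "xz = f (X \<inter> Z)"
      by (simp_all add: Int_Un_distrib)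
    have s1: "X \<inter> Y \<subseteq> A" "X \<inter> Z \<subseteq> A" using XYZ by auto
    have "is_sup S (f (X \<inter> Y)) (f (X \<inter> Z)) (f (X \<inter> Y \<union> X \<inter> Z))"
      using sc[OF s1] by blast
    then show "is_sup S xy xz d" using e by simp
  qed
  have fb: "f {} \<in> S" "f A \<in> S" unfolding S by auto
  have bt: "\<forall>x\<in>S. f {} \<subseteq> x \<and> x \<subseteq> f A"
  proof
    fix x assume "x \<in> S"
    then obtain X where X: "X \<subseteq> A" "x = f X" using memS by blast
    show "f {} \<subseteq> x \<and> x \<subseteq> f A" using emb[of "{}" X] emb[of X A] X by auto
  qed
  have cp: "\<forall>x\<in>S. \<exists>c\<in>S. is_sup S x c (f A) \<and> is_inf S x c (f {})"
  proof
    fix x assume "x \<in> S"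
    then obtain X where X: "X \<subseteq> A" "x = f X" using memS by blast
    have X2: "A - X \<subseteq> A" by auto
    have c: "f (A - X) \<in> S" unfolding S by auto
    have "is_sup S (f X) (f (A - X)) (f (X \<union> (A - X)))" using sc[OF X(1) X2] by blast
    moreover have "X \<union> (A - X) = A" using X by auto
    ultimately have a1: "is_sup S x (f (A - X)) (f A)" using X by simp
    have "is_inf S (f X) (f (A - X)) (f (X \<inter> (A - X)))" using ic[OF X(1) X2] by blast
    moreover have "X \<inter> (A - X) = {}" by auto
    ultimately have a2: "is_inf S x (f (A - X)) (f {})" using X by simp
    show "\<exists>c\<in>S. is_sup S x c (f A) \<and> is_inf S x c (f {})" using a1 a2 c by blast
  qed
  have 3: "\<exists>b\<in>S. \<exists>t\<in>S. (\<forall>x\<in>S. b \<subseteq> x \<and> x \<subseteq> t)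
        \<and> (\<forall>x\<in>S. \<exists>c\<in>S. is_sup S x c t \<and> is_inf S x c b)"
    using fb bt cp by blast
  show ?thesis unfolding boolean_poset_def using 1 2 3 by blast
qed


section \<open>Renaming states\<close>

definition ren :: "('s \<Rightarrow> 't) \<Rightarrow> ('s, 'a) nfa \<Rightarrow> ('t, 'a) nfa" where
  "ren h N = \<lparr>states = h ` states N, init = h ` init N, final = h ` final N,
     delta = (\<lambda>(p, a, q). (h p, a, h q)) ` delta N\<rparr>"

lemma ren_delta: "delta (ren h N) = (\<lambda>(p, a, q). (h p, a, h q)) ` delta N"
  by (simp add: ren_def)

lemma ren_delta_mem: "(p, a, q) \<in> delta N \<Longrightarrow> (h p, a, h q) \<in> delta (ren h N)"
  unfolding ren_delta by (rule rev_image_eqI[of "(p, a, q)"]) simp_all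

lemma ren_delta_inv:
  assumes "(x, a, y) \<in> delta (ren h N)"
  obtains p q where "(p, a, q) \<in> delta N" "x = h p" "y = h q"
proof -
  obtain t where t: "t \<in> delta N" "(x, a, y) = (\<lambda>(p, a, q). (h p, a, h q)) t"
    using assms unfolding ren_delta by blast
  obtain p b q where "t = (p, b, q)" by (cases t) blast
  with t that show ?thesis by auto
qed

lemma ren_step:
  assumes w: "wf_nfa N" and inj: "inj_on h (states N)" and S: "S \<subseteq> states N"
  shows "{q'. \<exists>q\<in>h ` S. (q, a, q') \<in> delta (ren h N)} = h ` {q'. \<exists>q\<in>S. (q, a, q') \<in> delta N}"
proof
  show "h ` {q'. \<exists>q\<in>S. (q, a, q') \<in> delta N} \<subseteq> {q'. \<exists>q\<in>h ` S. (q, a, q') \<in> delta (ren h N)}"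
  proof
    fix x assume "x \<in> h ` {q'. \<exists>q\<in>S. (q, a, q') \<in> delta N}"
    then obtain q q'' where qq: "x = h q''" "q \<in> S" "(q, a, q'') \<in> delta N" by blast
    have "(h q, a, h q'') \<in> delta (ren h N)" by (rule ren_delta_mem[OF qq(3)])
    then show "x \<in> {q'. \<exists>q\<in>h ` S. (q, a, q') \<in> delta (ren h N)}" using qq by blast
  qed
  show "{q'. \<exists>q\<in>h ` S. (q, a, q') \<in> delta (ren h N)} \<subseteq> h ` {q'. \<exists>q\<in>S. (q, a, q') \<in> delta N}"
  proof
    fix x assume "x \<in> {q'. \<exists>q\<in>h ` S. (q, a, q') \<in> delta (ren h N)}"
    then obtain p where p: "p \<in> S" "(h p, a, x) \<in> delta (ren h N)" by blast
    obtain p' q'' where pp: "(p', a, q'') \<in> delta N" "h p = h p'" "x = h q''"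
      by (rule ren_delta_inv[OF p(2)]) blast
    have "p' \<in> states N" using pp(1) w unfolding wf_nfa_def by blast
    moreover have "p \<in> states N" using p S by blast
    ultimately have "p = p'" using inj pp(2) by (simp add: inj_on_eq_iff)
    then show "x \<in> h ` {q'. \<exists>q\<in>S. (q, a, q') \<in> delta N}" using p pp by blast
  qed
qed

lemma ren_steps:
  assumes w: "wf_nfa N" and inj: "inj_on h (states N)"
  shows "S \<subseteq> states N \<Longrightarrow> steps (ren h N) (h ` S) u = h ` steps N S u"
proof (induction u arbitrary: S)
  case Nil then show ?case by simp
next
  case (Cons a u)
  have sub: "{q'. \<exists>q\<in>S. (q, a, q') \<in> delta N} \<subseteq> states N" using w by (auto simp: wf_nfa_def)
  show ?case using ren_step[OF w inj Cons.prems, of a] Cons.IH[OF sub] by simp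
qed

lemma ren_wf:
  assumes w: "wf_nfa N" shows "wf_nfa (ren h N)"
proof -
  have d: "delta (ren h N) \<subseteq> states (ren h N) \<times> UNIV \<times> states (ren h N)"
  proof
    fix t assume "t \<in> delta (ren h N)"
    moreover obtain x a y where "t = (x, a, y)" by (cases t) blast
    ultimately obtain p q where "(p, a, q) \<in> delta N" "x = h p" "y = h q" "t = (x, a, y)"
      using ren_delta_inv by metis
    moreover have "p \<in> states N" "q \<in> states N" using calculation(1) w unfolding wf_nfa_def by blast+
    ultimately show "t \<in> states (ren h N) \<times> UNIV \<times> states (ren h N)" by (simp add: ren_def)
  qed
  show ?thesis using w d unfolding wf_nfa_def by (auto simp: ren_def)
qed

lemma ren_simps: "states (ren h N) = h ` states N" "init (ren h N) = h ` init N"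
  "final (ren h N) = h ` final N"
  by (simp_all add: ren_def)

lemma img_int_ne:
  assumes inj: "inj_on h A" and "T \<subseteq> A" and "F \<subseteq> A"
  shows "(h ` T \<inter> h ` F \<noteq> {}) = (T \<inter> F \<noteq> {})"
proof -
  have "h ` T \<inter> h ` F = h ` (T \<inter> F)" by (rule inj_on_image_Int[OF inj assms(2,3), symmetric])
  then show ?thesis by simp
qed

lemma ren_lang:
  assumes w: "wf_nfa N" and inj: "inj_on h (states N)"
  shows "lang (ren h N) = lang N"
proof -
  have iS: "init N \<subseteq> states N" and fS: "final N \<subseteq> states N" using w by (auto simp: wf_nfa_def)
  have "(steps (ren h N) (init (ren h N)) u \<inter> final (ren h N) \<noteq> {})
      = (steps N (init N) u \<inter> final N \<noteq> {})" for u
  proof -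
    have "steps (ren h N) (init (ren h N)) u = h ` steps N (init N) u"
      unfolding ren_simps by (rule ren_steps[OF w inj iS])
    then show ?thesis unfolding ren_simps(3)
      using img_int_ne[OF inj steps_subset[OF w iS] fS] by simp
  qed
  then show ?thesis unfolding lang_def by blast
qed

lemma ren_state_lang:
  assumes w: "wf_nfa N" and inj: "inj_on h (states N)" and q: "q \<in> states N"
  shows "state_lang (ren h N) (h q) = state_lang N q"
proof -
  have iS: "{q} \<subseteq> states N" and fS: "final N \<subseteq> states N" using w q by (auto simp: wf_nfa_def)
  have "(steps (ren h N) {h q} u \<inter> final (ren h N) \<noteq> {})
      = (steps N {q} u \<inter> final N \<noteq> {})" for u
  proof -
    have "steps (ren h N) (h ` {q}) u = h ` steps N {q} u"
      by (rule ren_steps[OF w inj iS])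
    then show ?thesis unfolding ren_simps(3)
      using img_int_ne[OF inj steps_subset[OF w iS] fS] by simp
  qed
  then show ?thesis unfolding state_lang_def by blast
qed

theorem mainTheorem19:
  fixes N :: "('s, 'a::finite) nfa" and L :: "'a list set" and n :: nat
  assumes "wf_nfa N"
    and "card (states N) = n"
    and "lang N = L"
    and "card (left_derivs L) = 2 ^ n"
  shows "boolean_poset (LQ L) \<and> ns L = n \<and> nsyn L = n"
proof -
  note w = assms(1)
  let ?A = "states N"
  let ?R = "{steps N (init N) u | u. True}"
  let ?U = "UL N"
  have fA: "finite ?A" using w by (simp add: wf_nfa_def)
  have fP: "finite (Pow ?A)" using fA by simp
  have RP: "?R \<subseteq> Pow ?A" by (rule reach_subset[OF w])
  have fR: "finite ?R" using finite_subset[OF RP fP] .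
  have LD: "left_derivs L = ?U ` ?R" using left_derivs_UL[of N] assms(3) by simp
  have c1: "card (?U ` ?R) \<le> card ?R" by (rule card_image_le[OF fR])
  have c2: "card ?R \<le> card (Pow ?A)" by (rule card_mono[OF fP RP])
  have cP: "card (Pow ?A) = 2 ^ n" using fA assms(2) by (simp add: card_Pow)
  have cU: "card (?U ` ?R) = 2 ^ n" using assms(4) LD by simp
  have cR: "card ?R = card (Pow ?A)" using c1 c2 cP cU by linarith
  have RPeq: "?R = Pow ?A" using card_subset_eq[OF fP RP cR] .
  have cUP: "card (?U ` Pow ?A) = card (Pow ?A)" using cU cP RPeq by simp
  have injU: "inj_on ?U (Pow ?A)" by (rule eq_card_imp_inj_on[OF fP cUP])
  have ULun: "?U (X \<union> Y) = ?U X \<union> ?U Y" for X Y by (auto simp: UL_def)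
  have emb: "?U X \<subseteq> ?U Y \<longleftrightarrow> X \<subseteq> Y" if X: "X \<subseteq> ?A" and Y: "Y \<subseteq> ?A" for X Y
  proof
    assume "?U X \<subseteq> ?U Y"
    then have "?U (X \<union> Y) = ?U Y" unfolding ULun by blast
    then have "X \<union> Y = Y" by (rule inj_onD[OF injU]) (use X Y in auto)
    then show "X \<subseteq> Y" by auto
  next
    assume "X \<subseteq> Y" then show "?U X \<subseteq> ?U Y" by (auto simp: UL_def)
  qed
  have LDP: "left_derivs L = ?U ` Pow ?A" using LD RPeq by simp
  have LQeq: "LQ L = ?U ` Pow ?A"
  proof
    show "LQ L \<subseteq> ?U ` Pow ?A"
    proof
      fix x assume "x \<in> LQ L"
      then obtain F where F: "x = \<Union>F" "F \<subseteq> ?U ` Pow ?A" unfolding LQ_def LDP by auto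
      then obtain G where G: "G \<subseteq> Pow ?A" "F = ?U ` G" by (meson subset_image_iff)
      have "x = ?U (\<Union>G)" using F G by (auto simp: UL_def)
      moreover have "\<Union>G \<subseteq> ?A" using G by auto
      ultimately show "x \<in> ?U ` Pow ?A" by auto
    qed
  next
    show "?U ` Pow ?A \<subseteq> LQ L"
    proof
      fix x assume "x \<in> ?U ` Pow ?A"
      then have "x = \<Union>{x}" "finite {x}" "{x} \<subseteq> left_derivs L" using LDP by auto
      then show "x \<in> LQ L" unfolding LQ_def by blast
    qed
  qed
  have B: "boolean_poset (LQ L)"
    apply (rule boolean_from_pow[OF LQeq])
    apply (erule (1) emb)
    done
  obtain h :: "'s \<Rightarrow> nat" and m where h: "h ` ?A = {i. i < m}" "inj_on h ?A"
    using finite_imp_inj_to_nat_seg[OF fA] by blast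
  define M where "M = ren h N"
  have wM: "wf_nfa M" unfolding M_def by (rule ren_wf[OF w])
  have cM: "card (states M) = n" unfolding M_def using card_image[OF h(2)] assms(2)
    by (simp add: ren_def)
  have lM: "lang M = L" unfolding M_def using ren_lang[OF w h(2)] assms(3) by simp
  have sM: "\<forall>q\<in>states M. state_lang M q \<in> bool_gen (two_sided_derivs L)"
  proof
    fix q' assume "q' \<in> states M"
    then obtain q where q: "q \<in> ?A" "q' = h q" unfolding M_def by (auto simp: ren_def)
    have "{q} \<in> ?R" using RPeq q by auto
    then obtain u where u: "steps N (init N) u = {q}" by auto
    have "state_lang M q' = ?U {q}" using ren_state_lang[OF w h(2) q(1)] q
      unfolding M_def by (simp add: UL_def)
    also have "\<dots> = lderiv u L" using lderiv_UL[of u N] u assms(3) by simp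
    also have "\<dots> = {w. u @ w @ [] \<in> L}" by (simp add: lderiv_def)
    finally have "state_lang M q' \<in> two_sided_derivs L" unfolding two_sided_derivs_def by blast
    then show "state_lang M q' \<in> bool_gen (two_sided_derivs L)" by (rule bool_gen.gen)
  qed
  have lower: "n \<le> card (states M')" if "wf_nfa M'" "lang M' = L" for M' :: "(nat, 'a) nfa"
  proof -
    have "(2::nat) ^ n \<le> 2 ^ card (states M')"
      using card_ld_le[OF that(1)] that(2) assms(4) by simp
    then show ?thesis by simp
  qed
  have ns: "ns L = n" unfolding ns_def
  proof (rule Least_equality)
    show "\<exists>M :: (nat, 'a) nfa. wf_nfa M \<and> card (states M) = n \<and> lang M = L"
      using wM cM lM by blast
  next
    fix k assume "\<exists>M :: (nat, 'a) nfa. wf_nfa M \<and> card (states M) = k \<and> lang M = L"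
    then show "n \<le> k" using lower by blast
  qed
  have nsyn: "nsyn L = n" unfolding nsyn_def
  proof (rule Least_equality)
    show "\<exists>M :: (nat, 'a) nfa. wf_nfa M \<and> card (states M) = n \<and> lang M = L
      \<and> (\<forall>q\<in>states M. state_lang M q \<in> bool_gen (two_sided_derivs L))"
      using wM cM lM sM by blast
  next
    fix k assume "\<exists>M :: (nat, 'a) nfa. wf_nfa M \<and> card (states M) = k \<and> lang M = L
      \<and> (\<forall>q\<in>states M. state_lang M q \<in> bool_gen (two_sided_derivs L))"
    then show "n \<le> k" using lower by blast
  qed
  show ?thesis using B ns nsyn by blast
qed

end
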